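(* Let $\mathcal T$ be an infinite set of positive integers and for each $t\in\mathcal T$ let $H_t$ be a triangle-free graph on $t$ vertices that is $d$-regular with $d=\Theta(t^{2/3})$ and all of whose eigenvalues other than the largest have absolute value $O(t^{1/3})$. Then for any choice of subgraphs $H'_t\subseteq H_t$ ($t\in\mathcal T$) with $|H'_t|=(1-o(1))|H_t|$, $H'_t$ has a connected component with $t-o(t)$ vertices (asymptotics as $t\to\infty$ in $\mathcal T$).
   Context: $|H|$ denotes the number of edges. Eigenvalues are those of the adjacency matrix. *)

theory Defs
  imports Complex_Main "Jordan_Normal_Form.Char_Poly"
begin

(* A graph on vertex set {0..<t} is given by an edge predicate E; only pairs of
   vertices below t are relevant. *)

definition simple_graph_on :: "nat \<Rightarrow> (nat \<Rightarrow> nat \<Rightarrow> bool) \<Rightarrow> bool" where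
  "simple_graph_on t E \<longleftrightarrow> (\<forall>u<t. \<forall>v<t. E u v \<longrightarrow> E v u) \<and> (\<forall>v<t. \<not> E v v)"

definition triangle_free_on :: "nat \<Rightarrow> (nat \<Rightarrow> nat \<Rightarrow> bool) \<Rightarrow> bool" where
  "triangle_free_on t E \<longleftrightarrow> \<not> (\<exists>u<t. \<exists>v<t. \<exists>w<t. E u v \<and> E v w \<and> E u w)"

definition regular_on :: "nat \<Rightarrow> (nat \<Rightarrow> nat \<Rightarrow> bool) \<Rightarrow> nat \<Rightarrow> bool" where
  "regular_on t E d \<longleftrightarrow> (\<forall>v<t. card {u. u < t \<and> E v u} = d)"

definition num_edges :: "nat \<Rightarrow> (nat \<Rightarrow> nat \<Rightarrow> bool) \<Rightarrow> nat" where
  "num_edges t E = card {(u, v). u < v \<and> v < t \<and> E u v}"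

definition subgraph_on :: "nat \<Rightarrow> (nat \<Rightarrow> nat \<Rightarrow> bool) \<Rightarrow> (nat \<Rightarrow> nat \<Rightarrow> bool) \<Rightarrow> bool" where
  "subgraph_on t E' E \<longleftrightarrow> simple_graph_on t E' \<and> (\<forall>u<t. \<forall>v<t. E' u v \<longrightarrow> E u v)"

definition adj_mat :: "nat \<Rightarrow> (nat \<Rightarrow> nat \<Rightarrow> bool) \<Rightarrow> real mat" where
  "adj_mat t E = mat t t (\<lambda>(i, j). if E i j then 1 else 0)"

definition reach_on :: "nat \<Rightarrow> (nat \<Rightarrow> nat \<Rightarrow> bool) \<Rightarrow> nat \<Rightarrow> nat \<Rightarrow> bool" where
  "reach_on t E = (\<lambda>u v. u < t \<and> v < t \<and> E u v)\<^sup>*\<^sup>*"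

definition component_on :: "nat \<Rightarrow> (nat \<Rightarrow> nat \<Rightarrow> bool) \<Rightarrow> nat \<Rightarrow> nat set" where
  "component_on t E v = {u. u < t \<and> reach_on t E v u}"

(* All eigenvalues other than the largest one (counted with algebraic multiplicity,
   i.e. lambda_2, ..., lambda_t) have absolute value at most B. The adjacency matrix
   is real symmetric, so all its eigenvalues are real. *)
definition nontrivial_eigs_bounded :: "real mat \<Rightarrow> real \<Rightarrow> bool" where
  "nontrivial_eigs_bounded A B \<longleftrightarrow>
     (\<forall>\<mu>. eigenvalue A \<mu> \<longrightarrow>
        \<bar>\<mu>\<bar> \<le> B \<or>
        ((\<forall>\<nu>. eigenvalue A \<nu> \<longrightarrow> \<nu> \<le> \<mu>) \<and> order \<mu> (char_poly A) = 1))"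

end

theory Submission
  imports Defs "HOL-Analysis.Analysis"
begin


definition qf :: "nat \<Rightarrow> (nat \<Rightarrow> nat \<Rightarrow> real) \<Rightarrow> (nat \<Rightarrow> real) \<Rightarrow> real" where
  "qf n a x = (\<Sum>i<n. \<Sum>j<n. a i j * x i * x j)"
definition nsq :: "nat \<Rightarrow> (nat \<Rightarrow> real) \<Rightarrow> real" where
  "nsq n x = (\<Sum>i<n. (x i)\<^sup>2)"
definition av :: "nat \<Rightarrow> (nat \<Rightarrow> nat \<Rightarrow> real) \<Rightarrow> (nat \<Rightarrow> real) \<Rightarrow> nat \<Rightarrow> real" where
  "av n a x i = (\<Sum>j<n. a i j * x j)"

lemma qf_scale: "qf n a (\<lambda>i. c * x i) = c\<^sup>2 * qf n a x"
  unfolding qf_def by (simp add: sum_distrib_left power2_eq_square algebra_simps)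

lemma nsq_scale: "nsq n (\<lambda>i. c * x i) = c\<^sup>2 * nsq n x"
  unfolding nsq_def by (simp add: sum_distrib_left power_mult_distrib)

lemma nsq_nonneg: "nsq n x \<ge> 0"
  unfolding nsq_def by (simp add: sum_nonneg)

lemma nsq_zero: "nsq n x = 0 \<Longrightarrow> i < n \<Longrightarrow> x i = 0"
  unfolding nsq_def using sum_nonneg_eq_0_iff[of "{..<n}" "\<lambda>i. (x i)\<^sup>2"] by auto

lemma qf_av: "qf n a x = (\<Sum>i<n. x i * av n a x i)"
  unfolding qf_def av_def by (simp add: sum_distrib_left algebra_simps)

context
  fixes n :: nat and a :: "nat \<Rightarrow> nat \<Rightarrow> real" and d :: real
  assumes sym: "\<And>i j. i<n \<Longrightarrow> j<n \<Longrightarrow> a i j = a j i"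
    and nonneg: "\<And>i j. a i j \<ge> 0"
    and rows: "\<And>i. i<n \<Longrightarrow> (\<Sum>j<n. a i j) = d"
begin

lemma cols: "j<n \<Longrightarrow> (\<Sum>i<n. a i j) = d"
  using rows[of j] sym by (metis (no_types, lifting) lessThan_iff sum.cong)

lemma Psum: "(\<Sum>i<n. \<Sum>j<n. a i j * ((x i)\<^sup>2 + (x j)\<^sup>2)) = 2 * d * nsq n x"
proof -
  have "(\<Sum>i<n. \<Sum>j<n. a i j * ((x i)\<^sup>2 + (x j)\<^sup>2))
      = (\<Sum>i<n. \<Sum>j<n. a i j * (x i)\<^sup>2) + (\<Sum>i<n. \<Sum>j<n. a i j * (x j)\<^sup>2)"
    by (simp add: distrib_left sum.distrib)
  also have "(\<Sum>i<n. \<Sum>j<n. a i j * (x i)\<^sup>2) = (\<Sum>i<n. (\<Sum>j<n. a i j) * (x i)\<^sup>2)"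
    by (simp add: sum_distrib_right)
  also have "\<dots> = (\<Sum>i<n. (x i)\<^sup>2 * d)" using rows by (simp add: mult.commute)
  also have "(\<Sum>i<n. \<Sum>j<n. a i j * (x j)\<^sup>2) = (\<Sum>j<n. \<Sum>i<n. a i j * (x j)\<^sup>2)"
    by (rule sum.swap)
  also have "\<dots> = (\<Sum>j<n. (x j)\<^sup>2 * (\<Sum>i<n. a i j))"
    by (simp add: sum_distrib_left mult.commute)
  also have "\<dots> = (\<Sum>j<n. (x j)\<^sup>2 * d)" using cols by simp
  finally show ?thesis unfolding nsq_def by (simp add: sum_distrib_left algebra_simps)
qed

lemma Lap: "(\<Sum>i<n. \<Sum>j<n. a i j * (x i - x j)\<^sup>2) = 2 * d * nsq n x - 2 * qf n a x"
proof -
  have "(\<Sum>i<n. \<Sum>j<n. a i j * (x i - x j)\<^sup>2)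
     = (\<Sum>i<n. \<Sum>j<n. a i j * ((x i)\<^sup>2 + (x j)\<^sup>2)) - 2 * (\<Sum>i<n. \<Sum>j<n. a i j * x i * x j)"
    by (simp add: sum_subtractf[symmetric] sum_distrib_left power2_diff algebra_simps)
  then show ?thesis using Psum unfolding qf_def by simp
qed

lemma Lap_plus: "(\<Sum>i<n. \<Sum>j<n. a i j * (x i + x j)\<^sup>2) = 2 * d * nsq n x + 2 * qf n a x"
proof -
  have "(\<Sum>i<n. \<Sum>j<n. a i j * (x i + x j)\<^sup>2)
     = (\<Sum>i<n. \<Sum>j<n. a i j * ((x i)\<^sup>2 + (x j)\<^sup>2)) + 2 * (\<Sum>i<n. \<Sum>j<n. a i j * x i * x j)"
    by (simp add: sum.distrib[symmetric] sum_distrib_left power2_sum algebra_simps)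
  then show ?thesis using Psum unfolding qf_def by simp
qed

lemma qf_upper: "qf n a x \<le> d * nsq n x"
proof -
  have "0 \<le> (\<Sum>i<n. \<Sum>j<n. a i j * (x i - x j)\<^sup>2)"
    by (intro sum_nonneg mult_nonneg_nonneg nonneg) auto
  then show ?thesis using Lap by simp
qed

lemma qf_lower: "- (d * nsq n x) \<le> qf n a x"
proof -
  have "0 \<le> (\<Sum>i<n. \<Sum>j<n. a i j * (x i + x j)\<^sup>2)"
    by (intro sum_nonneg mult_nonneg_nonneg nonneg) auto
  then show ?thesis using Lap_plus by simp
qed

lemma sum_av: "(\<Sum>i<n. av n a y i) = d * (\<Sum>j<n. y j)"
proof -
  have "(\<Sum>i<n. av n a y i) = (\<Sum>j<n. \<Sum>i<n. a i j * y j)"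
    unfolding av_def by (rule sum.swap)
  also have "\<dots> = (\<Sum>j<n. y j * (\<Sum>i<n. a i j))" by (simp add: sum_distrib_left mult.commute)
  also have "\<dots> = (\<Sum>j<n. y j * d)" using cols by simp
  finally show ?thesis by (simp add: sum_distrib_left mult.commute)
qed

lemma qf_add: "qf n a (\<lambda>i. y i + e * r i) = qf n a y + 2 * e * (\<Sum>i<n. r i * av n a y i) + e\<^sup>2 * qf n a r"
proof -
  have "qf n a (\<lambda>i. y i + e * r i) = qf n a y + e * (\<Sum>i<n. \<Sum>j<n. a i j * r i * y j)
      + e * (\<Sum>i<n. \<Sum>j<n. a i j * y i * r j) + e\<^sup>2 * qf n a r"
    unfolding qf_def by (simp add: sum.distrib[symmetric] sum_distrib_left power2_eq_square algebra_simps)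
  also have "(\<Sum>i<n. \<Sum>j<n. a i j * r i * y j) = (\<Sum>i<n. r i * av n a y i)"
    unfolding av_def by (simp add: sum_distrib_left algebra_simps)
  also have "(\<Sum>i<n. \<Sum>j<n. a i j * y i * r j) = (\<Sum>j<n. \<Sum>i<n. a i j * y i * r j)"
    by (rule sum.swap)
  also have "\<dots> = (\<Sum>j<n. r j * av n a y j)"
    unfolding av_def sum_distrib_left
    by (intro sum.cong refl) (simp add: sym algebra_simps)
  finally show ?thesis by simp
qed

end

definition Sph :: "nat \<Rightarrow> (nat \<Rightarrow> real) set" where
  "Sph n = {x. (\<forall>i. n \<le> i \<longrightarrow> x i = 0) \<and> (\<Sum>i<n. x i) = 0 \<and> nsq n x = 1}"

lemma cont_sum: "continuous_on UNIV (\<lambda>x::nat\<Rightarrow>real. \<Sum>i<n. x i)"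
  by (intro continuous_intros continuous_on_product_coordinates)

lemma cont_nsq: "continuous_on UNIV (nsq n)"
  unfolding nsq_def by (intro continuous_intros continuous_on_product_coordinates)

lemma cont_qf: "continuous_on UNIV (qf n a)"
  unfolding qf_def by (intro continuous_intros continuous_on_product_coordinates)

lemma compact_Sph: "compact (Sph n)"
proof -
  define K where "K = PiE UNIV (\<lambda>i::nat. if i<n then {-1..(1::real)} else {0})"
  have "compactin (product_topology (\<lambda>i. euclideanreal) UNIV) K"
    unfolding K_def compactin_PiE by auto
  hence cK: "compact K" using euclidean_product_topology by (metis compactin_euclidean_iff)
  have cl: "closed ({x::nat\<Rightarrow>real. (\<Sum>i<n. x i) = 0} \<inter> {x. nsq n x = 1})"
    by (intro closed_Int closed_Collect_eq cont_sum cont_nsq continuous_on_const)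
  have "Sph n = K \<inter> ({x::nat\<Rightarrow>real. (\<Sum>i<n. x i) = 0} \<inter> {x. nsq n x = 1})"
  proof (intro equalityI subsetI)
    fix x assume x: "x \<in> Sph n"
    have "\<bar>x i\<bar> \<le> 1" if "i < n" for i
    proof -
      have "(x i)\<^sup>2 \<le> nsq n x" unfolding nsq_def
        by (rule member_le_sum) (use that in auto)
      with x have "(x i)\<^sup>2 \<le> 1\<^sup>2" by (simp add: Sph_def)
      thus ?thesis using abs_le_square_iff[of "x i" 1] by simp
    qed
    with x show "x \<in> K \<inter> ({x. (\<Sum>i<n. x i) = 0} \<inter> {x. nsq n x = 1})"
      by (auto simp: K_def Sph_def PiE_def extensional_def abs_le_iff)
  next
    fix x assume "x \<in> K \<inter> ({x. (\<Sum>i<n. x i) = 0} \<inter> {x. nsq n x = 1})"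
    then show "x \<in> Sph n" by (auto simp: K_def Sph_def PiE_def Pi_def split: if_splits) (meson leD)
  qed
  then show ?thesis using compact_Int_closed[OF cK cl] by simp
qed

lemma nsq_add: "nsq n (\<lambda>i. y i + e * r i) = nsq n y + 2 * e * (\<Sum>i<n. r i * y i) + e\<^sup>2 * nsq n r"
  unfolding nsq_def by (simp add: sum.distrib[symmetric] sum_distrib_left power2_eq_square algebra_simps)

lemma qf_zero: "(\<And>i. i < n \<Longrightarrow> x i = 0) \<Longrightarrow> qf n a x = 0"
  unfolding qf_def by simp

context
  fixes n :: nat and a :: "nat \<Rightarrow> nat \<Rightarrow> real" and d :: real
  assumes sym: "\<And>i j. i<n \<Longrightarrow> j<n \<Longrightarrow> a i j = a j i"
    and nonneg: "\<And>i j. a i j \<ge> 0"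
    and rows: "\<And>i. i<n \<Longrightarrow> (\<Sum>j<n. a i j) = d"
    and dpos: "d > 0"
begin

lemma eig_exists:
  assumes x0: "\<forall>i. n \<le> i \<longrightarrow> x0 i = 0" "(\<Sum>i<n. x0 i) = 0" "nsq n x0 \<noteq> 0"
  shows "\<exists>y. (\<forall>i. n \<le> i \<longrightarrow> y i = 0) \<and> (\<Sum>i<n. y i) = 0 \<and> nsq n y = 1 \<and>
     (\<forall>i<n. av n a y i = qf n a y * y i) \<and>
     (\<forall>z. (\<forall>i. n \<le> i \<longrightarrow> z i = 0) \<longrightarrow> (\<Sum>i<n. z i) = 0 \<longrightarrow> qf n a z \<le> qf n a y * nsq n z)"
proof -
  have ne: "Sph n \<noteq> {}"
  proof -
    define c where "c = 1 / sqrt (nsq n x0)"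
    have pos: "nsq n x0 > 0" using x0(3) nsq_nonneg[of n x0] by linarith
    have "c\<^sup>2 * nsq n x0 = 1" using pos by (simp add: c_def power_divide)
    hence "(\<lambda>i. c * x0 i) \<in> Sph n" using x0
      by (simp add: Sph_def nsq_scale sum_distrib_left[symmetric])
    thus ?thesis by blast
  qed
  obtain y where y: "y \<in> Sph n" and ymax: "\<And>z. z \<in> Sph n \<Longrightarrow> qf n a z \<le> qf n a y"
    using continuous_attains_sup[OF compact_Sph ne, of "qf n a"]
      continuous_on_subset[OF cont_qf[of n a]] by blast
  define lam where "lam = qf n a y"
  have y1: "\<forall>i. n \<le> i \<longrightarrow> y i = 0" "(\<Sum>i<n. y i) = 0" "nsq n y = 1" using y by (auto simp: Sph_def)
  have gen: "qf n a z \<le> lam * nsq n z" if z: "\<forall>i. n \<le> i \<longrightarrow> z i = 0" "(\<Sum>i<n. z i) = 0" for z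
  proof (cases "nsq n z = 0")
    case True
    then have "qf n a z = 0" by (intro qf_zero) (auto intro: nsq_zero)
    then show ?thesis using True by simp
  next
    case False
    define c where "c = 1 / sqrt (nsq n z)"
    have pos: "nsq n z > 0" using False nsq_nonneg[of n z] by linarith
    have c2: "c\<^sup>2 * nsq n z = 1" using pos by (simp add: c_def power_divide)
    hence "(\<lambda>i. c * z i) \<in> Sph n" using z
      by (simp add: Sph_def nsq_scale sum_distrib_left[symmetric])
    hence "c\<^sup>2 * qf n a z \<le> lam" using ymax[of "\<lambda>i. c * z i"] by (simp add: qf_scale lam_def)
    hence "nsq n z * (c\<^sup>2 * qf n a z) \<le> nsq n z * lam" using pos by (simp add: mult_left_mono)
    moreover have "nsq n z * (c\<^sup>2 * qf n a z) = (c\<^sup>2 * nsq n z) * qf n a z" by (simp add: algebra_simps)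
    ultimately have "(c\<^sup>2 * nsq n z) * qf n a z \<le> nsq n z * lam" by linarith
    thus ?thesis using c2 by (simp add: mult.commute)
  qed
  define r where "r = (\<lambda>i. if i < n then av n a y i - lam * y i else 0)"
  define R where "R = nsq n r"
  have r0: "\<forall>i. n \<le> i \<longrightarrow> r i = 0" by (simp add: r_def)
  have rsum: "(\<Sum>i<n. r i) = 0"
  proof -
    have "(\<Sum>i<n. r i) = (\<Sum>i<n. av n a y i) - lam * (\<Sum>i<n. y i)"
      by (simp add: r_def sum_subtractf sum_distrib_left)
    also have "\<dots> = 0" using sum_av[OF sym nonneg rows] y1 by simp
    finally show ?thesis .
  qed
  have ry: "(\<Sum>i<n. r i * y i) = 0"
  proof -
    have "(\<Sum>i<n. r i * y i) = (\<Sum>i<n. y i * av n a y i) - lam * nsq n y"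
      by (simp add: r_def nsq_def sum_subtractf sum_distrib_left power2_eq_square algebra_simps)
    also have "\<dots> = 0" using y1 by (simp add: qf_av[symmetric] lam_def)
    finally show ?thesis .
  qed
  have rav: "(\<Sum>i<n. r i * av n a y i) = R"
  proof -
    have "(\<Sum>i<n. r i * av n a y i) = (\<Sum>i<n. r i * r i + lam * (r i * y i))"
      by (intro sum.cong refl) (simp add: r_def algebra_simps)
    also have "\<dots> = R" using ry by (simp add: sum.distrib sum_distrib_left[symmetric] R_def nsq_def power2_eq_square)
    finally show ?thesis .
  qed
  define e where "e = 1 / (2 * d)"
  have epos: "e > 0" using dpos by (simp add: e_def)
  have "qf n a (\<lambda>i. y i + e * r i) \<le> lam * nsq n (\<lambda>i. y i + e * r i)"
    by (rule gen) (use y1 r0 rsum in \<open>auto simp: sum.distrib sum_distrib_left[symmetric]\<close>)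
  hence ineq: "lam + 2 * e * R + e\<^sup>2 * qf n a r \<le> lam * (1 + e\<^sup>2 * R)"
    using qf_add[OF sym nonneg rows, of y e r] nsq_add[of n y e r] rav ry y1
    by (simp add: lam_def R_def)
  have "- (d * R) \<le> qf n a r" using qf_lower[OF sym nonneg rows] by (simp add: R_def)
  hence A: "e\<^sup>2 * (- (d * R)) \<le> e\<^sup>2 * qf n a r" by (rule mult_left_mono) simp
  have "lam \<le> d" using qf_upper[OF sym nonneg rows, of y] y1 by (simp add: lam_def)
  have Rnn: "R \<ge> 0" by (simp add: R_def nsq_nonneg)
  have B: "lam * (e\<^sup>2 * R) \<le> d * (e\<^sup>2 * R)"
    by (rule mult_right_mono) (use \<open>lam \<le> d\<close> Rnn in auto)
  have ineq2: "2 * e * R + e\<^sup>2 * qf n a r \<le> lam * (e\<^sup>2 * R)"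
    using ineq by (simp add: algebra_simps)
  have "2 * e * R \<le> 2 * (e\<^sup>2 * (d * R))" using A B ineq2 by (simp add: algebra_simps)
  hence "R / d \<le> R / (2 * d)" using dpos by (simp add: e_def power2_eq_square field_simps)
  hence "R \<le> 0" using dpos Rnn by (simp add: field_simps)
  hence R0: "R = 0" using Rnn by simp
  have "\<forall>i<n. av n a y i = lam * y i"
  proof (intro allI impI)
    fix i assume i: "i < n"
    have "r i = 0" using nsq_zero[of n r i] R0 i by (simp add: R_def)
    thus "av n a y i = lam * y i" using i by (simp add: r_def)
  qed
  thus ?thesis using y1 gen unfolding lam_def by blast
qed
end

definition adjf :: "(nat \<Rightarrow> nat \<Rightarrow> bool) \<Rightarrow> nat \<Rightarrow> nat \<Rightarrow> real" where
  "adjf E i j = (if E i j then 1 else 0)"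

lemma adj_mult: "i < t \<Longrightarrow> vec_index (adj_mat t E *\<^sub>v Matrix.vec t y) i = av t (adjf E) y i"
  by (simp add: adj_mat_def av_def adjf_def scalar_prod_def lessThan_atLeast0)

lemma adjf_rows: assumes "regular_on t E dd" "i < t" shows "(\<Sum>j<t. adjf E i j) = real dd"
proof -
  have "(\<Sum>j<t. adjf E i j) = (\<Sum>j\<in>{..<t}. if E i j then 1 else 0)" by (simp add: adjf_def)
  also have "\<dots> = real (card {j\<in>{..<t}. E i j})"
    by (simp add: sum.inter_filter[symmetric])
  also have "{j\<in>{..<t}. E i j} = {u. u < t \<and> E i u}" by auto
  finally show ?thesis using assms by (simp add: regular_on_def)
qed

lemma adjf_sym: assumes "simple_graph_on t E" "i < t" "j < t" shows "adjf E i j = adjf E j i"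
  using assms by (auto simp: adjf_def simple_graph_on_def)

lemma spec_bound:
  assumes G: "simple_graph_on t E" and R: "regular_on t E dd" and dpos: "dd > 0"
    and EB: "nontrivial_eigs_bounded (adj_mat t E) B"
    and z: "\<forall>i. t \<le> i \<longrightarrow> z i = 0" "(\<Sum>i<t. z i) = 0"
  shows "qf t (adjf E) z \<le> B * nsq t z"
proof (cases "nsq t z = 0")
  case True
  then have "qf t (adjf E) z = 0" by (intro qf_zero) (auto intro: nsq_zero)
  then show ?thesis using True by simp
next
  case False
  note sym = adjf_sym[OF G] and nonneg = TrueI and rows = adjf_rows[OF R]
  have nn: "\<And>i j. adjf E i j \<ge> 0" by (simp add: adjf_def)
  have dp: "real dd > 0" using dpos by simp
  obtain y where y: "\<forall>i. t \<le> i \<longrightarrow> y i = 0" "(\<Sum>i<t. y i) = 0" "nsq t y = 1"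
     "\<forall>i<t. av t (adjf E) y i = qf t (adjf E) y * y i"
     "\<forall>z. (\<forall>i. t \<le> i \<longrightarrow> z i = 0) \<longrightarrow> (\<Sum>i<t. z i) = 0 \<longrightarrow> qf t (adjf E) z \<le> qf t (adjf E) y * nsq t z"
    using eig_exists[OF sym nn rows dp z False] by blast
  define lam where "lam = qf t (adjf E) y"
  define A where "A = adj_mat t E"
  have A: "A \<in> carrier_mat t t" by (simp add: A_def adj_mat_def)
  have yne: "Matrix.vec t y \<noteq> 0\<^sub>v t"
  proof
    assume "Matrix.vec t y = 0\<^sub>v t"
    hence "\<And>i. i < t \<Longrightarrow> y i = 0" by (metis index_vec index_zero_vec(1))
    hence "nsq t y = 0" by (simp add: nsq_def)
    with y(3) show False by simp
  qed
  have "eigenvector A (Matrix.vec t y) lam"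
    unfolding eigenvector_def using A yne y(4)
    by (auto intro!: eq_vecI simp: A_def adj_mult lam_def)
  hence ev: "eigenvalue A lam" by (auto simp: eigenvalue_def)
  have lam_le: "lam \<le> B"
  proof -
    from EB[unfolded nontrivial_eigs_bounded_def, folded A_def, rule_format, OF ev]
    consider "\<bar>lam\<bar> \<le> B" | "(\<forall>\<nu>. eigenvalue A \<nu> \<longrightarrow> \<nu> \<le> lam)" "order lam (char_poly A) = 1" by blast
    then show ?thesis
    proof cases
      case 1 then show ?thesis by simp
    next
      case 2
      have one_ne: "Matrix.vec t (\<lambda>_. 1::real) \<noteq> 0\<^sub>v t"
        using y(3) by (metis index_vec index_zero_vec(1) nsq_def lessThan_iff sum.neutral zero_neq_one)
      have "eigenvector A (Matrix.vec t (\<lambda>_. 1)) (real dd)"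
        unfolding eigenvector_def using A one_ne
        by (auto intro!: eq_vecI simp: A_def adj_mult av_def rows)
      hence "eigenvalue A (real dd)" by (auto simp: eigenvalue_def)
      with 2 have "real dd \<le> lam" by blast
      moreover have "lam \<le> real dd" using qf_upper[OF sym nn rows, of y] y(3) by (simp add: lam_def)
      ultimately have lamd: "lam = real dd" by simp
      have False
      proof -
        let ?p = "char_poly A"
        have p0: "?p \<noteq> 0" using degree_monic_char_poly[OF A] by auto
        have tpos: "t > 0" using y(3) by (cases t) (auto simp: nsq_def)
        have root: "poly ?p lam = 0" using ev eigenvalue_root_char_poly[OF A] by simp
        have erase: "poly (char_poly (mat_erase A i i)) lam = 0" if i: "i < t" for i
        proof -
          define w where "w = Matrix.vec t (\<lambda>j. y i - y j)"
          have wne: "w \<noteq> 0\<^sub>v t"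
          proof
            assume "w = 0\<^sub>v t"
            hence eq: "\<And>j. j < t \<Longrightarrow> y j = y i" unfolding w_def
              by (metis index_vec index_zero_vec(1) right_minus_eq)
            hence "(\<Sum>j<t. y j) = real t * y i" by simp
            hence "y i = 0" using y(2) tpos by simp
            hence "nsq t y = 0" using eq by (simp add: nsq_def)
            with y(3) show False by simp
          qed
          have Me: "mat_erase A i i \<in> carrier_mat t t" using A by simp
          have "eigenvector (mat_erase A i i) w lam"
            unfolding eigenvector_def
          proof (intro conjI)
            show "w \<in> carrier_vec (dim_row (mat_erase A i i))" using Me by (simp add: w_def)
            show "w \<noteq> 0\<^sub>v (dim_row (mat_erase A i i))" using wne Me by simp
            show "mat_erase A i i *\<^sub>v w = lam \<cdot>\<^sub>v w"
            proof (rule eq_vecI)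
              fix j assume "j < dim_vec (lam \<cdot>\<^sub>v w)"
              hence j: "j < t" by (simp add: w_def)
              have "vec_index (mat_erase A i i *\<^sub>v w) j = (\<Sum>k<t. (if j = i \<or> k = i then 0 else adjf E j k) * (y i - y k))"
                using j by (auto simp: mat_erase_def A_def adj_mat_def adjf_def w_def scalar_prod_def lessThan_atLeast0 intro!: sum.cong)
              also have "\<dots> = (if j = i then 0 else (\<Sum>k<t. adjf E j k * (y i - y k)))"
                by (auto intro!: sum.cong)
              also have "\<dots> = lam * (y i - y j)"
              proof (cases "j = i")
                case False
                have "(\<Sum>k<t. adjf E j k * (y i - y k)) = y i * (\<Sum>k<t. adjf E j k) - av t (adjf E) y j"
                  by (simp add: av_def sum_subtractf sum_distrib_left algebra_simps)
                also have "\<dots> = lam * (y i - y j)" using rows[OF j] y(4) j lamd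
                  by (simp add: lam_def algebra_simps)
                finally show ?thesis using False by simp
              qed simp
              also have "\<dots> = vec_index (lam \<cdot>\<^sub>v w) j" using j by (simp add: w_def)
              finally show "vec_index (mat_erase A i i *\<^sub>v w) j = vec_index (lam \<cdot>\<^sub>v w) j" .
            qed (use Me in \<open>simp add: w_def\<close>)
          qed
          hence "eigenvalue (mat_erase A i i) lam" by (auto simp: eigenvalue_def)
          thus ?thesis using eigenvalue_root_char_poly[OF Me] by simp
        qed
        have "poly (monom 1 1 * pderiv ?p) lam = 0"
          unfolding pderiv_char_poly_mat_erase[OF A] poly_sum using erase by simp
        hence pd: "poly (pderiv ?p) lam = 0" using lamd dpos by (simp add: poly_monom)
        have "pderiv ?p \<noteq> 0" using degree_monic_char_poly[OF A] tpos by (simp add: pderiv_eq_0_iff)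
        moreover have "order lam (pderiv ?p) = 0" using order_pderiv[OF p0 root] 2(2) by simp
        ultimately show False using pd order_root by blast
      qed
      then show ?thesis ..
    qed
  qed
  have "qf t (adjf E) z \<le> lam * nsq t z" using y(5) z by (simp add: lam_def)
  also have "\<dots> \<le> B * nsq t z" by (rule mult_right_mono[OF lam_le nsq_nonneg])
  finally show ?thesis .
qed

lemma double_count:
  fixes t :: nat
  shows "(\<Sum>i<t. \<Sum>j<t. if P i j then c else 0) = c * real (card {(i,j). i<t \<and> j<t \<and> P i j})"
proof -
  have "(\<Sum>i<t. \<Sum>j<t. if P i j then c else 0) = (\<Sum>p\<in>{..<t}\<times>{..<t}. if P (fst p) (snd p) then c else 0)"
    by (simp add: sum.cartesian_product case_prod_beta)
  also have "\<dots> = (\<Sum>p\<in>{p\<in>{..<t}\<times>{..<t}. P (fst p) (snd p)}. c)"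
    by (rule sum.inter_filter[symmetric]) (simp add: finite_cartesian_product)
  also have "{p\<in>{..<t}\<times>{..<t}. P (fst p) (snd p)} = {(i,j). i<t \<and> j<t \<and> P i j}" by auto
  finally show ?thesis by simp
qed

lemma cut_bound:
  assumes G: "simple_graph_on t E" and R: "regular_on t E dd" and dpos: "dd > 0"
    and EB: "nontrivial_eigs_bounded (adj_mat t E) B"
    and S: "S \<subseteq> {..<t}"
  shows "2 * (real dd - B) * real (card S) * (real t - real (card S))
          \<le> real t * real (card {(i,j). i<t \<and> j<t \<and> E i j \<and> (i \<in> S \<longleftrightarrow> j \<notin> S)})"
proof -
  define s where "s = real (card S)"
  define tt where "tt = real t"
  define x where "x = (\<lambda>i. if i < t then (if i \<in> S then tt - s else - s) else 0)"
  have fin: "finite S" using S finite_subset by blast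
  have cS: "card ({..<t} - S) = t - card S" using S by (simp add: card_Diff_subset fin)
  have cle: "card S \<le> t" using S card_mono[of "{..<t}" S] by simp
  have cS': "real (card ({..<t} - S)) = tt - s" using cS cle by (simp add: tt_def s_def)
  have split: "(\<Sum>i<t. f i) = (\<Sum>i\<in>S. f i) + (\<Sum>i\<in>{..<t} - S. f i)" for f :: "nat \<Rightarrow> real"
    using S by (metis Diff_partition finite_Diff finite_lessThan fin sum.union_disjoint Diff_disjoint)
  have x0: "\<forall>i. t \<le> i \<longrightarrow> x i = 0" by (simp add: x_def)
  have xS: "\<And>i. i \<in> S \<Longrightarrow> x i = tt - s" and xN: "\<And>i. i \<in> {..<t} - S \<Longrightarrow> x i = - s"
    using S by (auto simp: x_def)
  have xsum: "(\<Sum>i<t. x i) = 0"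
    using split[of x] xS xN cS' by (simp add: s_def algebra_simps)
  have xnsq: "nsq t x = s * (tt - s) * tt"
    using split[of "\<lambda>i. (x i)\<^sup>2"] xS xN cS' unfolding nsq_def
    by (simp add: s_def power2_eq_square algebra_simps)
  have sym: "\<And>i j. i<t \<Longrightarrow> j<t \<Longrightarrow> adjf E i j = adjf E j i" using adjf_sym[OF G] by blast
  have nn: "\<And>i j. adjf E i j \<ge> 0" by (simp add: adjf_def)
  note rows = adjf_rows[OF R]
  have sb: "qf t (adjf E) x \<le> B * nsq t x" by (rule spec_bound[OF G R dpos EB x0 xsum])
  have "(\<Sum>i<t. \<Sum>j<t. adjf E i j * (x i - x j)\<^sup>2) = 2 * real dd * nsq t x - 2 * qf t (adjf E) x"
    by (rule Lap[OF sym nn rows])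
  also have "(\<Sum>i<t. \<Sum>j<t. adjf E i j * (x i - x j)\<^sup>2)
      = (\<Sum>i<t. \<Sum>j<t. if E i j \<and> (i \<in> S \<longleftrightarrow> j \<notin> S) then tt\<^sup>2 else 0)"
    by (intro sum.cong refl) (auto simp: adjf_def x_def power2_eq_square algebra_simps)
  also have "\<dots> = tt\<^sup>2 * real (card {(i,j). i<t \<and> j<t \<and> E i j \<and> (i \<in> S \<longleftrightarrow> j \<notin> S)})"
    by (rule double_count)
  finally have "tt\<^sup>2 * real (card {(i,j). i<t \<and> j<t \<and> E i j \<and> (i \<in> S \<longleftrightarrow> j \<notin> S)})
      \<ge> 2 * (real dd - B) * nsq t x" using sb by (simp add: algebra_simps)
  hence "tt * (tt * real (card {(i,j). i<t \<and> j<t \<and> E i j \<and> (i \<in> S \<longleftrightarrow> j \<notin> S)}))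
      \<ge> tt * (2 * (real dd - B) * s * (tt - s))" using xnsq by (simp add: power2_eq_square algebra_simps)
  moreover have "tt \<ge> 0" by (simp add: tt_def)
  ultimately show ?thesis
    using cle by (cases "tt = 0") (auto simp: tt_def s_def mult_le_cancel_left)
qed


lemma num_edges_le: assumes R: "regular_on t E dd" shows "num_edges t E \<le> t * dd"
proof -
  have "{(u, v). u < v \<and> v < t \<and> E u v} \<subseteq> Sigma {..<t} (\<lambda>u. {v. v < t \<and> E u v})" by auto
  hence "num_edges t E \<le> card (Sigma {..<t} (\<lambda>u. {v. v < t \<and> E u v}))"
    unfolding num_edges_def by (intro card_mono) auto
  also have "\<dots> = (\<Sum>u<t. card {v. v < t \<and> E u v})" by (simp add: card_SigmaI)
  also have "\<dots> = t * dd" using R by (simp add: regular_on_def)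
  finally show ?thesis .
qed

definition closedS :: "nat \<Rightarrow> (nat \<Rightarrow> nat \<Rightarrow> bool) \<Rightarrow> nat set \<Rightarrow> bool" where
  "closedS t E S \<longleftrightarrow> S \<subseteq> {..<t} \<and> (\<forall>u\<in>S. \<forall>v<t. E u v \<longrightarrow> v \<in> S)"

lemma cross_le:
  assumes G: "simple_graph_on t H" and sub: "subgraph_on t H' H" and S: "closedS t H' S"
  shows "real (card {(i,j). i<t \<and> j<t \<and> H i j \<and> (i \<in> S \<longleftrightarrow> j \<notin> S)})
          \<le> 2 * (real (num_edges t H) - real (num_edges t H'))"
proof -
  define EH where "EH = {(u, v). u < v \<and> v < t \<and> H u v}"
  define EH' where "EH' = {(u, v). u < v \<and> v < t \<and> H' u v}"
  define D where "D = EH - EH'"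
  define X where "X = {(i,j). i<t \<and> j<t \<and> H i j \<and> (i \<in> S \<longleftrightarrow> j \<notin> S)}"
  have finEH: "finite EH"
    by (rule finite_subset[of _ "{..<t} \<times> {..<t}"]) (auto simp: EH_def)
  have sub': "EH' \<subseteq> EH" using sub unfolding EH'_def EH_def subgraph_on_def by auto
  have cD: "card D = card EH - card EH'" unfolding D_def
    by (rule card_Diff_subset[OF finite_subset[OF sub' finEH] sub'])
  have le: "card EH' \<le> card EH" by (rule card_mono[OF finEH sub'])
  have Gs: "\<And>u v. u < t \<Longrightarrow> v < t \<Longrightarrow> H u v \<Longrightarrow> H v u" using G unfolding simple_graph_on_def by blast
  have G's: "\<And>u v. u < t \<Longrightarrow> v < t \<Longrightarrow> H' u v \<Longrightarrow> H' v u"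
    using sub unfolding simple_graph_on_def subgraph_on_def by blast
  have Scl: "\<And>u v. u \<in> S \<Longrightarrow> v < t \<Longrightarrow> H' u v \<Longrightarrow> v \<in> S" using S unfolding closedS_def by blast
  have XD: "X \<subseteq> D \<union> prod.swap ` D"
  proof
    fix p assume "p \<in> X"
    then obtain i j where p: "p = (i,j)" and ij: "i<t" "j<t" "H i j" "i \<in> S \<longleftrightarrow> j \<notin> S"
      unfolding X_def by blast
    have n1: "\<not> H' i j"
    proof
      assume h: "H' i j"
      show False
      proof (cases "i \<in> S")
        case True then show False using Scl[OF True ij(2) h] ij(4) by simp
      next
        case False
        have "H' j i" using G's[OF ij(1,2) h] .
        moreover have "j \<in> S" using False ij(4) by simp
        ultimately show False using Scl[OF _ ij(1)] False by blast
      qed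
    qed
    have n2: "\<not> H' j i" using n1 G's ij(1,2) by blast
    have "i \<noteq> j" using ij(4) by blast
    then consider "i < j" | "j < i" by linarith
    then show "p \<in> D \<union> prod.swap ` D"
    proof cases
      case 1
      have "(i,j) \<in> D" unfolding D_def EH_def EH'_def using 1 ij n1 by simp
      then show ?thesis using p by simp
    next
      case 2
      have "(j,i) \<in> D" unfolding D_def EH_def EH'_def using 2 ij n2 Gs[OF ij(1,2,3)] by simp
      hence "prod.swap (j,i) \<in> prod.swap ` D" by (rule imageI)
      then show ?thesis using p by simp
    qed
  qed
  have finD: "finite D" using finEH by (simp add: D_def)
  have "card X \<le> card (D \<union> prod.swap ` D)"
    by (rule card_mono[OF _ XD]) (simp add: finD)
  also have "\<dots> \<le> card D + card (prod.swap ` D)" by (rule card_Un_le)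
  also have "\<dots> \<le> 2 * card D" using card_image_le[OF finD, of prod.swap] by simp
  finally have "card X \<le> 2 * card D" .
  hence "real (card X) \<le> 2 * real (card D)" by linarith
  also have "real (card D) = real (num_edges t H) - real (num_edges t H')"
    using cD le unfolding num_edges_def EH_def EH'_def by (simp add: of_nat_diff)
  finally show ?thesis unfolding X_def .
qed

lemma reach_sym: assumes G: "simple_graph_on t E" and r: "reach_on t E u v" shows "reach_on t E v u"
proof -
  have "symp (\<lambda>u v. u < t \<and> v < t \<and> E u v)" using G by (auto simp: symp_def simple_graph_on_def)
  hence "symp (reach_on t E)" unfolding reach_on_def by (rule symp_rtranclp)
  thus ?thesis using r by (auto dest: sympD)
qed

lemma closed_reach: assumes S: "closedS t E S" and u: "u \<in> S" and r: "reach_on t E u v" shows "v \<in> S"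
  using r[unfolded reach_on_def] u
  by (induction rule: rtranclp_induct) (use S in \<open>auto simp: closedS_def\<close>)

lemma comp_closed: "closedS t E (component_on t E v)"
  unfolding closedS_def component_on_def reach_on_def
  by (auto intro: rtranclp.rtrancl_into_rtrancl)

lemma comp_self: "v < t \<Longrightarrow> v \<in> component_on t E v"
  by (simp add: component_on_def reach_on_def)

lemma comp_disj: assumes G: "simple_graph_on t E" and S: "closedS t E S" and v: "v \<notin> S"
  shows "component_on t E v \<inter> S = {}"
proof (rule ccontr)
  assume "component_on t E v \<inter> S \<noteq> {}"
  then obtain u where "u \<in> S" "reach_on t E v u" by (auto simp: component_on_def)
  then show False using reach_sym[OF G] closed_reach[OF S] v by blast
qed

lemma closed_Un: "closedS t E A \<Longrightarrow> closedS t E B \<Longrightarrow> closedS t E (A \<union> B)"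
  by (auto simp: closedS_def)

lemma closed_card: "closedS t E S \<Longrightarrow> card S \<le> t"
  unfolding closedS_def using card_mono[of "{..<t}" S] by auto

lemma giant:
  fixes t :: nat and E eta delta
  assumes G: "simple_graph_on t E" and tpos: "t > 0" and dpos: "delta > 0"
    and eta1: "eta < 1/9" and eta2: "eta < 2 * delta / 3"
    and bnd: "\<And>S. closedS t E S \<Longrightarrow> real (card S) * (real t - real (card S)) \<le> eta * (real t)\<^sup>2"
  shows "\<exists>v<t. real (card (component_on t E v)) \<ge> (1 - delta) * real t"
proof (rule ccontr)
  assume "\<not> ?thesis"
  hence small: "\<And>v. v < t \<Longrightarrow> real (card (component_on t E v)) < (1 - delta) * real t" by force
  define tt where "tt = real t"
  have ttpos: "tt > 0" using tpos by (simp add: tt_def)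
  have mid: False if S: "closedS t E S" "tt / 3 \<le> real (card S)" "real (card S) \<le> 2 * tt / 3" for S
  proof -
    have "tt / 3 * (tt / 3) \<le> real (card S) * (tt - real (card S))"
      by (rule mult_mono) (use S ttpos in auto)
    moreover have "eta * tt\<^sup>2 < tt / 3 * (tt / 3)" using eta1 ttpos
      by (simp add: power2_eq_square field_simps)
    ultimately show False using bnd[OF S(1)] by (simp add: tt_def)
  qed
  show False
  proof (cases "\<exists>v<t. real (card (component_on t E v)) > 2 * tt / 3")
    case True
    then obtain v where v: "v < t" "real (card (component_on t E v)) > 2 * tt / 3" by blast
    let ?s = "real (card (component_on t E v))"
    have "tt - ?s > delta * tt" using small[OF v(1)] by (simp add: tt_def algebra_simps)
    have "2 * tt / 3 * (delta * tt) < ?s * (tt - ?s)"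
    proof -
      have "0 < ?s" using v(2) ttpos by linarith
      moreover have "0 \<le> delta * tt" using dpos ttpos by simp
      ultimately show ?thesis by (rule mult_strict_mono[OF v(2) \<open>tt - ?s > delta * tt\<close>])
    qed
    moreover have "eta * tt\<^sup>2 \<le> 2 * tt / 3 * (delta * tt)" using eta2 ttpos
      by (simp add: power2_eq_square field_simps)
    ultimately show False using bnd[OF comp_closed[of t E v]] by (simp add: tt_def)
  next
    case False
    hence compsmall: "\<And>v. v < t \<Longrightarrow> real (card (component_on t E v)) \<le> 2 * tt / 3" by force
    define F where "F = {S. closedS t E S \<and> real (card S) \<le> 2 * tt / 3}"
    have finF: "finite F" by (rule finite_subset[of _ "Pow {..<t}"]) (auto simp: F_def closedS_def)
    have "{} \<in> F" using ttpos by (simp add: F_def closedS_def)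
    hence neF: "card ` F \<noteq> {}" by blast
    define m where "m = Max (card ` F)"
    obtain S where SF: "S \<in> F" and Sm: "card S = m" using Max_in[OF finite_imageI[OF finF] neF] m_def by auto
    have Smax: "\<And>S'. S' \<in> F \<Longrightarrow> card S' \<le> card S" using Max_ge[OF finite_imageI[OF finF]] Sm m_def by auto
    have Scl: "closedS t E S" and Sle: "real (card S) \<le> 2 * tt / 3" using SF by (auto simp: F_def)
    have Slt: "real (card S) < tt / 3" using mid[OF Scl _ Sle] not_le by blast
    hence "card S < t" using ttpos by (simp add: tt_def)
    hence "S \<noteq> {..<t}" by auto
    then obtain v where v: "v < t" "v \<notin> S" using Scl by (auto simp: closedS_def)
    define C where "C = component_on t E v"
    have Ccl: "closedS t E C" by (simp add: C_def comp_closed)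
    have disj: "C \<inter> S = {}" using comp_disj[OF G Scl v(2)] by (simp add: C_def)
    have vC: "v \<in> C" using comp_self[OF v(1)] by (simp add: C_def)
    have finC: "finite C" and finS: "finite S" using Ccl Scl by (auto simp: closedS_def intro: finite_subset)
    have cU: "card (S \<union> C) = card S + card C" using card_Un_disjoint[OF finS finC] disj by auto
    have Cpos: "card C > 0" using vC finC card_gt_0_iff by blast
    show False
    proof (cases "real (card S) + real (card C) \<le> 2 * tt / 3")
      case True
      hence "S \<union> C \<in> F" using closed_Un[OF Scl Ccl] cU by (simp add: F_def)
      from Smax[OF this] cU Cpos show False by simp
    next
      case False
      have "real (card C) \<le> 2 * tt / 3" using compsmall[OF v(1)] by (simp add: C_def)
      moreover have "tt / 3 \<le> real (card C)" using False Slt by linarith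
      ultimately show False using mid[OF Ccl] by blast
    qed
  qed
qed

lemma cube_root_bound:
  fixes K :: real and t :: nat
  assumes K: "K > 0" and tK: "real t \<ge> K ^ 3"
  shows "real t powr (1/3) \<ge> K"
proof -
  have "K ^ 3 = K powr 3" using K by (simp add: powr_realpow)
  hence "(K ^ 3) powr (1/3) = (K powr 3) powr (1/3)" by simp
  also have "\<dots> = K powr (3 * (1/3))" by (rule powr_powr)
  also have "\<dots> = K" using K by simp
  finally have "(K ^ 3) powr (1/3) = K" .
  moreover have "(K ^ 3) powr (1/3) \<le> real t powr (1/3)"
    by (rule powr_mono2) (use K tK in simp_all)
  ultimately show ?thesis by simp
qed

theorem corollary4p10:
  fixes T :: "nat set"
    and H :: "nat \<Rightarrow> nat \<Rightarrow> nat \<Rightarrow> bool"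
    and d :: "nat \<Rightarrow> nat"
  assumes T_pos: "\<forall>t\<in>T. t > 0"
    and T_inf: "infinite T"
    and H_graph: "\<forall>t\<in>T. simple_graph_on t (H t)"
    and H_tf: "\<forall>t\<in>T. triangle_free_on t (H t)"
    and H_reg: "\<forall>t\<in>T. regular_on t (H t) (d t)"
    and d_Theta: "\<exists>c1>0. \<exists>c2>0. \<exists>N. \<forall>t\<in>T. t \<ge> N \<longrightarrow>
                    c1 * real t powr (2/3) \<le> real (d t) \<and> real (d t) \<le> c2 * real t powr (2/3)"
    and H_eigs: "\<exists>C>0. \<exists>N. \<forall>t\<in>T. t \<ge> N \<longrightarrow>
                    nontrivial_eigs_bounded (adj_mat t (H t)) (C * real t powr (1/3))"
  shows "\<forall>H' :: nat \<Rightarrow> nat \<Rightarrow> nat \<Rightarrow> bool.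
           (\<forall>t\<in>T. subgraph_on t (H' t) (H t)) \<longrightarrow>
           (\<forall>\<epsilon>>0. \<exists>N. \<forall>t\<in>T. t \<ge> N \<longrightarrow>
                real (num_edges t (H' t)) \<ge> (1 - \<epsilon>) * real (num_edges t (H t))) \<longrightarrow>
           (\<forall>\<epsilon>>0. \<exists>N. \<forall>t\<in>T. t \<ge> N \<longrightarrow>
                (\<exists>v<t. real (card (component_on t (H' t) v)) \<ge> (1 - \<epsilon>) * real t))"
proof (intro allI impI)
  fix H' :: "nat \<Rightarrow> nat \<Rightarrow> nat \<Rightarrow> bool"
  assume sub: "\<forall>t\<in>T. subgraph_on t (H' t) (H t)"
  assume edges: "\<forall>\<epsilon>>0. \<exists>N. \<forall>t\<in>T. t \<ge> N \<longrightarrow>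
                real (num_edges t (H' t)) \<ge> (1 - \<epsilon>) * real (num_edges t (H t))"
    fix delta :: real assume dpos: "delta > 0"
    obtain c1 c2 N1 where c1: "c1 > 0" and N1': "\<forall>t\<in>T. t \<ge> N1 \<longrightarrow>
                    c1 * real t powr (2/3) \<le> real (d t) \<and> real (d t) \<le> c2 * real t powr (2/3)"
      using d_Theta by auto
    have N1: "\<forall>t\<in>T. t \<ge> N1 \<longrightarrow> c1 * real t powr (2/3) \<le> real (d t)" using N1' by simp
    obtain C N2 where C: "C > 0" and N2: "\<forall>t\<in>T. t \<ge> N2 \<longrightarrow>
                    nontrivial_eigs_bounded (adj_mat t (H t)) (C * real t powr (1/3))"
      using H_eigs by auto
    define eta where "eta = min (1/20) (delta/4)"
    have eta1: "eta < 1/9" and eta2: "eta < 2 * delta / 3" and etapos: "eta > 0"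
      using dpos by (auto simp: eta_def min_def)
    obtain N3 where N3: "\<forall>t\<in>T. t \<ge> N3 \<longrightarrow>
                real (num_edges t (H' t)) \<ge> (1 - eta/2) * real (num_edges t (H t))"
      using edges etapos by (meson half_gt_zero)
    define K where "K = 2 * C / c1"
    have Kpos: "K > 0" using C c1 by (simp add: K_def)
    define N4 where "N4 = nat \<lceil>K ^ 3\<rceil>"
    show "\<exists>N. \<forall>t\<in>T. t \<ge> N \<longrightarrow>
                (\<exists>v<t. real (card (component_on t (H' t) v)) \<ge> (1 - delta) * real t)"
    proof (rule exI[of _ "max (max N1 N2) (max N3 N4)"], intro ballI impI)
      fix t assume tT: "t \<in> T" and tN: "max (max N1 N2) (max N3 N4) \<le> t"
      have tpos: "t > 0" using T_pos tT by blast
      have G: "simple_graph_on t (H t)" using H_graph tT by blast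
      have R: "regular_on t (H t) (d t)" using H_reg tT by blast
      have subt: "subgraph_on t (H' t) (H t)" using sub tT by blast
      have G': "simple_graph_on t (H' t)" using subt by (simp add: subgraph_on_def)
      define B where "B = C * real t powr (1/3)"
      have EB: "nontrivial_eigs_bounded (adj_mat t (H t)) B" using N2 tT tN by (simp add: B_def)
      have dlow: "c1 * real t powr (2/3) \<le> real (d t)" using N1 tT tN by simp
      have edg: "real (num_edges t (H' t)) \<ge> (1 - eta/2) * real (num_edges t (H t))" using N3 tT tN by simp
      have "real t \<ge> K ^ 3"
      proof -
        have "real N4 \<ge> K ^ 3" unfolding N4_def by linarith
        moreover have "N4 \<le> t" using tN by simp
        ultimately show ?thesis by linarith
      qed
      hence pK: "real t powr (1/3) \<ge> K" by (rule cube_root_bound[OF Kpos])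
      define p where "p = real t powr (1/3)"
      have ppos: "p > 0" using tpos by (simp add: p_def)
      have p2: "real t powr (2/3) = p * p"
        unfolding p_def by (simp add: powr_add[symmetric])
      have "2 * B = c1 * K * p" using c1 by (simp add: K_def B_def p_def)
      also have "\<dots> \<le> c1 * p * p" using pK c1 ppos by (simp add: p_def)
      also have "\<dots> \<le> real (d t)" using dlow p2 by (simp add: mult.assoc)
      finally have Bd: "2 * B \<le> real (d t)" .
      have dtpos: "real (d t) > 0"
      proof -
        have "0 < c1 * p * p" using c1 ppos by simp
        thus ?thesis using dlow p2 by (simp add: mult.assoc)
      qed
      hence dpos': "d t > 0" by simp
      have bnd: "real (card S) * (real t - real (card S)) \<le> eta * (real t)\<^sup>2"
        if S: "closedS t (H' t) S" for S
      proof -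
        define X where "X = real (card {(i,j). i<t \<and> j<t \<and> H t i j \<and> (i \<in> S \<longleftrightarrow> j \<notin> S)})"
        define P where "P = real (card S) * (real t - real (card S))"
        define nH where "nH = real (num_edges t (H t))"
        define nH' where "nH' = real (num_edges t (H' t))"
        define dd where "dd = real (d t)"
        define tt where "tt = real t"
        have Ssub: "S \<subseteq> {..<t}" using S by (simp add: closedS_def)
        have a: "2 * (dd - B) * P \<le> tt * X"
          using cut_bound[OF G R dpos' EB Ssub] by (simp add: X_def P_def dd_def tt_def mult.assoc)
        have b: "X \<le> 2 * (nH - nH')" using cross_le[OF G subt S] by (simp add: X_def nH_def nH'_def)
        have c: "(1 - eta/2) * nH \<le> nH'" using edg by (simp add: nH_def nH'_def)
        have dd': "nH \<le> tt * dd" using num_edges_le[OF R] by (simp add: nH_def tt_def dd_def flip: of_nat_mult)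
        have e: "0 \<le> P" using closed_card[OF S] by (simp add: P_def)
        have ttpos: "tt > 0" using tpos by (simp add: tt_def)
        have ddpos: "dd > 0" using dtpos by (simp add: dd_def)
        have "nH - nH' \<le> eta/2 * nH" using c by (simp add: algebra_simps)
        also have "\<dots> \<le> eta/2 * (tt * dd)" using dd' etapos by (simp add: mult_left_mono)
        finally have "X \<le> eta * (tt * dd)" using b by simp
        hence "tt * X \<le> tt * (eta * (tt * dd))" using ttpos by (simp add: mult_left_mono)
        moreover have "dd * P \<le> 2 * (dd - B) * P" using Bd e by (intro mult_right_mono) (simp_all add: dd_def)
        ultimately have "dd * P \<le> dd * (eta * tt\<^sup>2)" using a by (simp add: power2_eq_square algebra_simps)
        hence "P \<le> eta * tt\<^sup>2" using ddpos by simp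
        thus ?thesis by (simp add: P_def tt_def)
      qed
      show "\<exists>v<t. real (card (component_on t (H' t) v)) \<ge> (1 - delta) * real t"
        by (rule giant[OF G' tpos dpos eta1 eta2 bnd])
    qed
qed

end
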